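(* Let $d \geq 2$, $N, K \geq 1$ be integers, $\mathbf{y}_1,\ldots,\mathbf{y}_N \in \mathbb{R}^d$ with matrix $\mathbf{Y} = [\mathbf{y}_1,\ldots,\mathbf{y}_N] \in \mathbb{R}^{d\times N}$, and $\rho_k^{[i]} \geq 0$ with $\sum_{k=1}^K \rho_k^{[i]} = 1$ for each $i$. Put $\mathbf{A}_k = \sum_{i} \rho_k^{[i]}\mathbf{y}_i\mathbf{y}_i^\mathrm{T}$, $\gamma_k = \sum_i \rho_k^{[i]}$, and $\lambda_k = $ largest eigenvalue of $\mathbf{A}_k$. For $S \subseteq [K] = \{1,\ldots,K\}$ define \[ \sigma^2(S) = \frac{\|\mathbf{Y}\|_\mathrm{F}^2 - \sum_{k\in S}\lambda_k}{dN - \sum_{k\in S}\gamma_k},\qquad g(S) = \Big[dN - \sum_{k\in S}\gamma_k\Big]\ln \sigma^2(S) + \sum_{k\in S}\gamma_k \ln\frac{\lambda_k}{\gamma_k}, \] and assume that $\gamma_k > 0$, $\lambda_k > 0$ for all $k$ and $\sigma^2(S) > 0$ for all $S \subseteq [K]$. If $S \subseteq [K]$ and $j \in S$ satisfy $\sigma^2(S) \leq \lambda_j/\gamma_j$, then $g(S) \leq g(S \setminus \{j\})$.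
   Context: $\|\cdot\|_\mathrm{F}$ is the Frobenius norm; $\ln$ is the natural logarithm. *)

theory Defs
  imports "HOL-Analysis.Analysis"
begin

text \<open>Vectors in R^d are elements of real^'d (d = CARD('d)); the data points are
  y 0, ..., y (N-1); the weights are rho k i for k < K, i < N.\<close>

definition outer_self :: "real^'d \<Rightarrow> real^'d^'d" where
  "outer_self v = (\<chi> a b. v $ a * v $ b)"

definition Amat :: "(nat \<Rightarrow> real^'d) \<Rightarrow> (nat \<Rightarrow> nat \<Rightarrow> real) \<Rightarrow> nat \<Rightarrow> nat \<Rightarrow> real^'d^'d" where
  "Amat y rho N k = (\<Sum>i<N. rho k i *\<^sub>R outer_self (y i))"

definition gam :: "(nat \<Rightarrow> nat \<Rightarrow> real) \<Rightarrow> nat \<Rightarrow> nat \<Rightarrow> real" where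
  "gam rho N k = (\<Sum>i<N. rho k i)"

definition is_eigenvalue :: "real^'d^'d \<Rightarrow> real \<Rightarrow> bool" where
  "is_eigenvalue A l \<longleftrightarrow> (\<exists>v. v \<noteq> 0 \<and> A *v v = l *\<^sub>R v)"

definition largest_eigenvalue :: "real^'d^'d \<Rightarrow> real" where
  "largest_eigenvalue A = Max {l. is_eigenvalue A l}"

definition lam :: "(nat \<Rightarrow> real^'d) \<Rightarrow> (nat \<Rightarrow> nat \<Rightarrow> real) \<Rightarrow> nat \<Rightarrow> nat \<Rightarrow> real" where
  "lam y rho N k = largest_eigenvalue (Amat y rho N k)"

definition frob_sq :: "(nat \<Rightarrow> real^'d) \<Rightarrow> nat \<Rightarrow> real" where
  "frob_sq y N = (\<Sum>i<N. \<Sum>a\<in>UNIV. (y i $ a)\<^sup>2)"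

definition sigma2 :: "(nat \<Rightarrow> real^'d) \<Rightarrow> (nat \<Rightarrow> nat \<Rightarrow> real) \<Rightarrow> nat \<Rightarrow> nat set \<Rightarrow> real" where
  "sigma2 y rho N S =
     (frob_sq y N - (\<Sum>k\<in>S. lam y rho N k)) /
     (real CARD('d) * real N - (\<Sum>k\<in>S. gam rho N k))"

definition gfun :: "(nat \<Rightarrow> real^'d) \<Rightarrow> (nat \<Rightarrow> nat \<Rightarrow> real) \<Rightarrow> nat \<Rightarrow> nat set \<Rightarrow> real" where
  "gfun y rho N S =
     (real CARD('d) * real N - (\<Sum>k\<in>S. gam rho N k)) * ln (sigma2 y rho N S)
     + (\<Sum>k\<in>S. gam rho N k * ln (lam y rho N k / gam rho N k))"

end

theory Submission
  imports Defs
begin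

lemma key_ineq:
  fixes p q u v :: real
  assumes p: "p > 0" and q: "q > 0" and u: "u > 0" and v: "v > 0"
  shows "p * ln (u / p) + q * ln (v / q) \<le> (p + q) * ln ((u + v) / (p + q))"
proof -
  define m where "m = (u + v) / (p + q)"
  have m: "m > 0" using p q u v by (simp add: m_def)
  have 1: "ln ((u/p) / m) \<le> (u/p)/m - 1" using p u m by (intro ln_le_minus_one) simp
  have 2: "ln ((v/q) / m) \<le> (v/q)/m - 1" using q v m by (intro ln_le_minus_one) simp
  have "p * ln ((u/p) / m) + q * ln ((v/q) / m) \<le> p * ((u/p)/m - 1) + q * ((v/q)/m - 1)"
    using 1 2 p q by (intro add_mono mult_left_mono) auto
  also have "\<dots> = (u + v) / m - (p + q)" using p q m by (simp add: field_simps)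
  also have "\<dots> = 0" using p q u v by (simp add: m_def)
  finally have 3: "p * ln ((u/p) / m) + q * ln ((v/q) / m) \<le> 0" .
  have "ln ((u/p) / m) = ln (u/p) - ln m" using p u m by (simp add: ln_div ln_mult)
  moreover have "ln ((v/q) / m) = ln (v/q) - ln m" using q v m by (simp add: ln_div ln_mult)
  ultimately have "p * ln ((u/p) / m) + q * ln ((v/q) / m) = p * ln (u/p) + q * ln (v/q) - (p + q) * ln m"
    by (simp only: right_diff_distrib distrib_right)
  thus ?thesis using 3 by (simp add: m_def[symmetric])
qed

theorem lemma3:
  fixes y :: "nat \<Rightarrow> real^'d" and rho :: "nat \<Rightarrow> nat \<Rightarrow> real"
    and N K j :: nat and S :: "nat set"
  assumes d2: "CARD('d) \<ge> 2" and N1: "N \<ge> 1" and K1: "K \<ge> 1"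
    and rho_nonneg: "\<And>k i. k < K \<Longrightarrow> i < N \<Longrightarrow> rho k i \<ge> 0"
    and rho_sum: "\<And>i. i < N \<Longrightarrow> (\<Sum>k<K. rho k i) = 1"
    and gam_pos: "\<And>k. k < K \<Longrightarrow> gam rho N k > 0"
    and lam_pos: "\<And>k. k < K \<Longrightarrow> lam y rho N k > 0"
    and sigma_pos: "\<And>T. T \<subseteq> {..<K} \<Longrightarrow> sigma2 y rho N T > 0"
    and S: "S \<subseteq> {..<K}" and j: "j \<in> S"
    and le: "sigma2 y rho N S \<le> lam y rho N j / gam rho N j"
  shows "gfun y rho N S \<le> gfun y rho N (S - {j})"
proof -
  have finS: "finite S" using S finite_subset by blast
  have jK: "j < K" using S j by auto
  define G where "G = gam rho N j"
  define L where "L = lam y rho N j"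
  define A where "A = (\<Sum>k\<in>S - {j}. gam rho N k)"
  define B where "B = (\<Sum>k\<in>S - {j}. lam y rho N k)"
  define R where "R = (\<Sum>k\<in>S - {j}. gam rho N k * ln (lam y rho N k / gam rho N k))"
  define F0 where "F0 = frob_sq y N"
  define c where "c = real CARD('d) * real N"
  have sG: "(\<Sum>k\<in>S. gam rho N k) = G + A" unfolding G_def A_def
    using sum.remove[OF finS j] by simp
  have sL: "(\<Sum>k\<in>S. lam y rho N k) = L + B" unfolding L_def B_def
    using sum.remove[OF finS j] by simp
  have sR: "(\<Sum>k\<in>S. gam rho N k * ln (lam y rho N k / gam rho N k)) = G * ln (L/G) + R"
    unfolding G_def L_def R_def using sum.remove[OF finS j] by simp
  have tot: "(\<Sum>k<K. gam rho N k) = real N"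
    unfolding gam_def using rho_sum by (subst sum.swap) simp
  have "(\<Sum>k\<in>S. gam rho N k) \<le> (\<Sum>k<K. gam rho N k)"
    using S gam_pos by (intro sum_mono2) (auto intro: less_imp_le)
  hence "G + A \<le> real N" using sG tot by simp
  moreover have "c \<ge> 2 * real N" unfolding c_def using d2
    by (metis mult_right_mono of_nat_0_le_iff of_nat_le_iff of_nat_numeral)
  ultimately have Dp: "c - A - G > 0" using N1 by simp
  have Gp: "G > 0" "L > 0" using gam_pos lam_pos jK G_def L_def by auto
  have "sigma2 y rho N S > 0" using sigma_pos S by blast
  hence "(F0 - B - L) / (c - A - G) > 0"
    unfolding sigma2_def using sG sL F0_def c_def by (simp add: algebra_simps)
  hence Fp: "F0 - B - L > 0" using Dp by (simp add: zero_less_divide_iff)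
  have gS: "gfun y rho N S = (c - A - G) * ln ((F0 - B - L) / (c - A - G)) + (G * ln (L/G) + R)"
    unfolding gfun_def sigma2_def using sG sL sR F0_def c_def by (simp add: algebra_simps)
  have gSj: "gfun y rho N (S - {j}) = (c - A) * ln ((F0 - B) / (c - A)) + R"
    unfolding gfun_def sigma2_def A_def B_def R_def F0_def c_def by simp
  have "(c - A - G) * ln ((F0 - B - L) / (c - A - G)) + G * ln (L/G)
     \<le> ((c - A - G) + G) * ln (((F0 - B - L) + L) / ((c - A - G) + G))"
    by (rule key_ineq[OF Dp Gp(1) Fp Gp(2)])
  thus ?thesis using gS gSj by simp
qed

end
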